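(* Let $G$ and $H$ be graphs. (i) If $G$ has a point-finite and honest $H$-decomposition into connected parts of finitely bounded size and $H$ is accessible, then $G$ is accessible. (ii) If $G$ has an honest $H$-decomposition into finite connected parts such that the graphs $H_v\subseteq H$ ($v\in V(G)$) have finitely bounded order and $G$ is accessible, then $H$ is accessible.
   Context: An $H$-decomposition of $G$ is a pair $(H,(G_h)_{h\in H})$ of subgraphs $G_h\subseteq G$ with $G=\bigcup_h G_h$ and, for every vertex $v$ of $G$, $H_v:=H[\{h:v\in G_h\}]$ connected. It is point-finite if every $H_v$ is finite and honest if $G_h\cap G_{h'}\neq\emptyset$ for every edge $hh'$ of $H$; its parts are the $G_h$. An end of a graph is an equivalence class of rays, two rays being equivalent if for every finite vertex set $X$ they have tails in the same component of the graph minus $X$. A separation of a graph is $\{A,B\}$ with $A\cup B$ the vertex set and no edge between $A\setminus B$ and $B\setminus A$, of order $|A\cap B|$; a finite-order separation distinguishes two ends if rays of one have tails in the subgraph induced by $A$ and rays of the other have tails in that induced by $B$. A graph is accessible if there is $K\in\mathbb{N}$ such that every two of its ends are distinguished by a separation of order at most $K$. *)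

theory Defs
  imports Main
begin

type_synonym 'a graph = "'a set \<times> ('a \<times> 'a) set"

definition verts :: "'a graph \<Rightarrow> 'a set" where "verts G = fst G"
definition edges :: "'a graph \<Rightarrow> ('a \<times> 'a) set" where "edges G = snd G"

definition wf_graph :: "'a graph \<Rightarrow> bool" where
  "wf_graph G \<longleftrightarrow> edges G \<subseteq> verts G \<times> verts G \<and> sym (edges G)
     \<and> (\<forall>x. (x, x) \<notin> edges G)"

definition subgraph :: "'a graph \<Rightarrow> 'a graph \<Rightarrow> bool" where
  "subgraph F G \<longleftrightarrow> wf_graph F \<and> verts F \<subseteq> verts G \<and> edges F \<subseteq> edges G"

definition connected_on :: "'a graph \<Rightarrow> 'a set \<Rightarrow> bool" where
  "connected_on G S \<longleftrightarrow> S \<noteq> {} \<and> S \<subseteq> verts G \<and>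
     (\<forall>u\<in>S. \<forall>v\<in>S. (u, v) \<in> (edges G \<inter> (S \<times> S))\<^sup>*)"

definition connected_graph :: "'a graph \<Rightarrow> bool" where
  "connected_graph G \<longleftrightarrow> connected_on G (verts G)"

definition ray :: "'a graph \<Rightarrow> (nat \<Rightarrow> 'a) \<Rightarrow> bool" where
  "ray G r \<longleftrightarrow> inj r \<and> (\<forall>i. r i \<in> verts G) \<and> (\<forall>i. (r i, r (Suc i)) \<in> edges G)"

definition has_tail_in :: "(nat \<Rightarrow> 'a) \<Rightarrow> 'a set \<Rightarrow> bool" where
  "has_tail_in r S \<longleftrightarrow> (\<exists>n. \<forall>i\<ge>n. r i \<in> S)"

definition component_of :: "'a graph \<Rightarrow> 'a set \<Rightarrow> 'a \<Rightarrow> 'a set" where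
  "component_of G X v = {u. (v, u) \<in> (edges G \<inter> ((verts G - X) \<times> (verts G - X)))\<^sup>*}"

definition components_minus :: "'a graph \<Rightarrow> 'a set \<Rightarrow> 'a set set" where
  "components_minus G X = component_of G X ` (verts G - X)"

definition rays_equiv :: "'a graph \<Rightarrow> (nat \<Rightarrow> 'a) \<Rightarrow> (nat \<Rightarrow> 'a) \<Rightarrow> bool" where
  "rays_equiv G r s \<longleftrightarrow> (\<forall>X. finite X \<longrightarrow>
     (\<exists>C \<in> components_minus G X. has_tail_in r C \<and> has_tail_in s C))"

definition is_end :: "'a graph \<Rightarrow> (nat \<Rightarrow> 'a) set \<Rightarrow> bool" where
  "is_end G \<omega> \<longleftrightarrow> (\<exists>r. ray G r \<and> \<omega> = {s. ray G s \<and> rays_equiv G r s})"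

definition separation :: "'a graph \<Rightarrow> 'a set \<Rightarrow> 'a set \<Rightarrow> bool" where
  "separation G A B \<longleftrightarrow> A \<union> B = verts G \<and>
     (\<forall>x y. (x, y) \<in> edges G \<longrightarrow> \<not> (x \<in> A - B \<and> y \<in> B - A))"

definition distinguishes :: "'a set \<Rightarrow> 'a set \<Rightarrow> (nat \<Rightarrow> 'a) set \<Rightarrow> (nat \<Rightarrow> 'a) set \<Rightarrow> bool" where
  "distinguishes A B \<omega> \<omega>' \<longleftrightarrow>
     ((\<forall>r\<in>\<omega>. has_tail_in r A) \<and> (\<forall>r\<in>\<omega>'. has_tail_in r B)) \<or>
     ((\<forall>r\<in>\<omega>. has_tail_in r B) \<and> (\<forall>r\<in>\<omega>'. has_tail_in r A))"

definition accessible :: "'a graph \<Rightarrow> bool" where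
  "accessible G \<longleftrightarrow> (\<exists>K::nat. \<forall>\<omega> \<omega>'. is_end G \<omega> \<longrightarrow> is_end G \<omega>' \<longrightarrow> \<omega> \<noteq> \<omega>' \<longrightarrow>
     (\<exists>A B. separation G A B \<and> finite (A \<inter> B) \<and> card (A \<inter> B) \<le> K \<and>
            distinguishes A B \<omega> \<omega>'))"

text \<open>H-decompositions: P h is the part G_h for h a vertex of H.\<close>
definition Hv :: "'b graph \<Rightarrow> ('b \<Rightarrow> 'a graph) \<Rightarrow> 'a \<Rightarrow> 'b set" where
  "Hv H P v = {h \<in> verts H. v \<in> verts (P h)}"

definition decomposition :: "'a graph \<Rightarrow> 'b graph \<Rightarrow> ('b \<Rightarrow> 'a graph) \<Rightarrow> bool" where
  "decomposition G H P \<longleftrightarrow>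
     (\<forall>h\<in>verts H. subgraph (P h) G) \<and>
     verts G = (\<Union>h\<in>verts H. verts (P h)) \<and>
     edges G = (\<Union>h\<in>verts H. edges (P h)) \<and>
     (\<forall>v\<in>verts G. connected_on H (Hv H P v))"

definition point_finite :: "'a graph \<Rightarrow> 'b graph \<Rightarrow> ('b \<Rightarrow> 'a graph) \<Rightarrow> bool" where
  "point_finite G H P \<longleftrightarrow> (\<forall>v\<in>verts G. finite (Hv H P v))"

definition honest :: "'b graph \<Rightarrow> ('b \<Rightarrow> 'a graph) \<Rightarrow> bool" where
  "honest H P \<longleftrightarrow> (\<forall>h h'. (h, h') \<in> edges H \<longrightarrow> verts (P h) \<inter> verts (P h') \<noteq> {})"

end

theory Submission
  imports Defs
begin


lemma wf_edge: "wf_graph G \<Longrightarrow> (x,y) \<in> edges G \<Longrightarrow> x \<in> verts G \<and> y \<in> verts G"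
  by (auto simp: wf_graph_def)

lemma sym_restr: "wf_graph G \<Longrightarrow> sym (edges G \<inter> D \<times> D)"
  unfolding wf_graph_def sym_def by blast

lemma rt_rev: "wf_graph G \<Longrightarrow> (x,y) \<in> (edges G \<inter> D \<times> D)\<^sup>* \<Longrightarrow> (y,x) \<in> (edges G \<inter> D \<times> D)\<^sup>*"
  using sym_rtrancl[OF sym_restr] by (metis symD)

lemma sep_path:
  assumes "wf_graph G" "separation G A B" "(x,y) \<in> (edges G \<inter> D \<times> D)\<^sup>*" "x \<in> A - B"
  shows "y \<in> A - B \<or> D \<inter> A \<inter> B \<noteq> {}"
  using assms(3,4)
proof (induction rule: rtrancl_induct)
  case base thus ?case by simp
next
  case (step y z)
  show ?case
  proof (cases "D \<inter> A \<inter> B \<noteq> {}")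
    case True thus ?thesis by simp
  next
    case False
    with step have y: "y \<in> A - B" by blast
    from step(2) have e: "(y,z) \<in> edges G" "z \<in> D" by auto
    have "z \<in> A \<union> B" using wf_edge[OF assms(1) e(1)] assms(2) by (auto simp: separation_def)
    moreover have "\<not> (z \<in> B - A)" using assms(2) e(1) y by (auto simp: separation_def)
    ultimately show ?thesis using False e(2) by blast
  qed
qed

lemma comp_eq:
  assumes "wf_graph G" "u \<in> component_of G X v1" "u \<in> component_of G X v2"
  shows "component_of G X v1 = component_of G X v2"
proof -
  let ?R = "edges G \<inter> (verts G - X) \<times> (verts G - X)"
  have a: "(v1,u) \<in> ?R\<^sup>*" "(v2,u) \<in> ?R\<^sup>*" using assms(2,3) by (auto simp: component_of_def)
  have "(u,v2) \<in> ?R\<^sup>*" using rt_rev[OF assms(1) a(2)] .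
  hence b: "(v1,v2) \<in> ?R\<^sup>*" using a(1) by auto
  have "(v2,v1) \<in> ?R\<^sup>*" using rt_rev[OF assms(1) b] .
  show ?thesis unfolding component_of_def
  proof (intro set_eqI iffI; simp)
    fix w assume "(v1, w) \<in> ?R\<^sup>*"
    with \<open>(v2,v1) \<in> ?R\<^sup>*\<close> show "(v2, w) \<in> ?R\<^sup>*" by (rule rtrancl_trans)
  next
    fix w assume "(v2, w) \<in> ?R\<^sup>*"
    with b show "(v1, w) \<in> ?R\<^sup>*" by (rule rtrancl_trans)
  qed
qed

lemma tail_both: "has_tail_in r C1 \<Longrightarrow> has_tail_in r C2 \<Longrightarrow> \<exists>n. \<forall>i\<ge>n. r i \<in> C1 \<inter> C2"
  unfolding has_tail_in_def
proof (elim exE)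
  fix n1 n2 assume "\<forall>i\<ge>n1. r i \<in> C1" "\<forall>i\<ge>n2. r i \<in> C2"
  thus "\<exists>n. \<forall>i\<ge>n. r i \<in> C1 \<inter> C2" by (intro exI[of _ "max n1 n2"]) auto
qed

lemma fin_nat_bd: "finite (S::nat set) \<Longrightarrow> \<exists>k. S \<subseteq> {..<k}"
  using Max_ge[of S] by (intro exI[of _ "Suc (Max S)"]) (auto simp: less_Suc_eq_le)

lemma inj_avoid: "inj (r::nat \<Rightarrow> 'a) \<Longrightarrow> finite X \<Longrightarrow> \<exists>n. \<forall>i\<ge>n. r i \<notin> X"
proof -
  assume "inj r" "finite X"
  have "finite (r -` X)" using finite_vimageI[OF \<open>finite X\<close> \<open>inj r\<close>] .
  then obtain k where k: "r -` X \<subseteq> {..<k}" using fin_nat_bd by blast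
  have "\<forall>i\<ge>k. r i \<notin> X"
  proof (intro allI impI notI)
    fix i assume "k \<le> i" "r i \<in> X"
    hence "i \<in> r -` X" by simp
    with k have "i < k" by blast
    with \<open>k \<le> i\<close> show False by simp
  qed
  thus ?thesis by blast
qed

lemma ray_path:
  assumes "ray G r" "\<forall>i\<ge>n. r i \<notin> X" "n \<le> i"
  shows "(r n, r i) \<in> (edges G \<inter> (verts G - X) \<times> (verts G - X))\<^sup>*"
  using assms(3)
proof (induction rule: dec_induct)
  case base then show ?case by simp
next
  case (step m)
  have "(r m, r (Suc m)) \<in> edges G \<inter> (verts G - X) \<times> (verts G - X)"
    using assms(1,2) step(1,2) unfolding ray_def by auto
  with step(3) show ?case by (rule rtrancl_into_rtrancl)
qed

lemma ray_tail_comp: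
  assumes "ray G r" "\<forall>i\<ge>n. r i \<notin> X"
  shows "has_tail_in r (component_of G X (r n))"
proof -
  have "\<forall>i\<ge>n. r i \<in> component_of G X (r n)"
    unfolding component_of_def mem_Collect_eq using ray_path[OF assms] by blast
  thus ?thesis unfolding has_tail_in_def by blast
qed

lemma rays_equiv_refl:
  assumes "ray G r" shows "rays_equiv G r r"
  unfolding rays_equiv_def
proof (intro allI impI)
  fix X :: "'a set" assume "finite X"
  then obtain n where n: "\<forall>i\<ge>n. r i \<notin> X" using inj_avoid[of r X] assms \<open>finite X\<close> unfolding ray_def by blast
  have "r n \<in> verts G - X" using n assms unfolding ray_def by auto
  hence "component_of G X (r n) \<in> components_minus G X" unfolding components_minus_def by blast
  thus "\<exists>C\<in>components_minus G X. has_tail_in r C \<and> has_tail_in r C"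
    using ray_tail_comp[OF assms n] by blast
qed

lemma rays_equiv_sym1: "rays_equiv G r s \<Longrightarrow> rays_equiv G s r"
  unfolding rays_equiv_def
proof (intro allI impI)
  fix X :: "'a set" assume "\<forall>X. finite X \<longrightarrow> (\<exists>C\<in>components_minus G X. has_tail_in r C \<and> has_tail_in s C)" "finite X"
  then obtain C where "C\<in>components_minus G X" "has_tail_in r C" "has_tail_in s C" by blast
  thus "\<exists>C\<in>components_minus G X. has_tail_in s C \<and> has_tail_in r C" by blast
qed

lemma rays_equiv_sym: "rays_equiv G r s \<longleftrightarrow> rays_equiv G s r"
  using rays_equiv_sym1 by blast

lemma rays_equiv_trans:
  assumes "wf_graph G" "rays_equiv G r a" "rays_equiv G r b"
  shows "rays_equiv G a b"
  unfolding rays_equiv_def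
proof (intro allI impI)
  fix X :: "'a set" assume X: "finite X"
  obtain C1 where C1: "C1 \<in> components_minus G X" "has_tail_in r C1" "has_tail_in a C1"
    using assms(2) X unfolding rays_equiv_def by blast
  obtain C2 where C2: "C2 \<in> components_minus G X" "has_tail_in r C2" "has_tail_in b C2"
    using assms(3) X unfolding rays_equiv_def by blast
  obtain n where "\<forall>i\<ge>n. r i \<in> C1 \<inter> C2" using tail_both[OF C1(2) C2(2)] by blast
  hence u: "r n \<in> C1" "r n \<in> C2" by auto
  obtain v1 v2 where "C1 = component_of G X v1" "C2 = component_of G X v2"
    using C1(1) C2(1) unfolding components_minus_def by blast
  hence "C1 = C2" using comp_eq[OF assms(1)] u by metis
  thus "\<exists>C\<in>components_minus G X. has_tail_in a C \<and> has_tail_in b C" using C1 C2 by blast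
qed

lemma class_eq:
  assumes "wf_graph G" "rays_equiv G r r'"
  shows "{s. ray G s \<and> rays_equiv G r s} = {s. ray G s \<and> rays_equiv G r' s}"
  unfolding set_eq_iff mem_Collect_eq
proof (intro allI iffI)
  fix s assume "ray G s \<and> rays_equiv G r s"
  thus "ray G s \<and> rays_equiv G r' s" using rays_equiv_trans[OF assms(1) assms(2)] by blast
next
  fix s assume "ray G s \<and> rays_equiv G r' s"
  moreover have "rays_equiv G r' r" using assms(2) rays_equiv_sym by blast
  ultimately show "ray G s \<and> rays_equiv G r s" using rays_equiv_trans[OF assms(1)] by blast
qed

lemma sep_tail:
  assumes wf: "wf_graph G" and sep: "separation G A B" and fin: "finite (A \<inter> B)"
    and eq: "rays_equiv G r r''" and r: "ray G r" and tA: "has_tail_in r A"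
  shows "has_tail_in r'' A"
proof -
  let ?X = "A \<inter> B"
  let ?R = "edges G \<inter> (verts G - ?X) \<times> (verts G - ?X)"
  obtain C where C: "C \<in> components_minus G ?X" "has_tail_in r C" "has_tail_in r'' C"
    using eq fin unfolding rays_equiv_def by blast
  obtain v where v: "C = component_of G ?X v" using C(1) unfolding components_minus_def by blast
  obtain n0 where n0: "\<forall>i\<ge>n0. r i \<notin> ?X" using inj_avoid[of r ?X] r fin unfolding ray_def by blast
  obtain n1 where n1: "\<forall>i\<ge>n1. r i \<in> A \<inter> C" using tail_both[OF tA C(2)] by blast
  define i where "i = max n0 n1"
  have ri: "r i \<in> A - B" "r i \<in> C" using n0 n1 unfolding i_def by auto
  have "C \<subseteq> A"
  proof
    fix u assume u: "u \<in> C"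
    have "(v, r i) \<in> ?R\<^sup>*" "(v,u) \<in> ?R\<^sup>*" using ri(2) u v unfolding component_of_def by auto
    hence "(r i, u) \<in> ?R\<^sup>*" using rt_rev[OF wf] by (meson rtrancl_trans)
    from sep_path[OF wf sep this ri(1)] show "u \<in> A" by blast
  qed
  thus ?thesis using C(3) unfolding has_tail_in_def by blast
qed



lemma fin_tail: "finite {i::nat. P i} \<Longrightarrow> \<exists>k. \<forall>i\<ge>k. \<not> P i"
proof -
  assume "finite {i::nat. P i}"
  then obtain k where k: "{i. P i} \<subseteq> {..<k}" using fin_nat_bd by blast
  have "\<forall>i\<ge>k. \<not> P i"
  proof (intro allI impI notI)
    fix i assume "k \<le> i" "P i"
    with k have "i < k" by blast
    with \<open>k \<le> i\<close> show False by simp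
  qed
  thus ?thesis by blast
qed

lemma comp_in: "(v,u) \<in> (E \<inter> D \<times> D)\<^sup>* \<Longrightarrow> v \<in> D \<Longrightarrow> u \<in> D"
  by (induct rule: rtrancl_induct) auto

lemma sep_swap: "wf_graph G \<Longrightarrow> separation G A B \<Longrightarrow> separation G B A"
  unfolding separation_def wf_graph_def sym_def by blast

lemma restrict_comp:
  assumes "(x,u) \<in> (R \<inter> D \<times> D)\<^sup>*"
  shows "(x,u) \<in> (R \<inter> {v. (x,v) \<in> (R \<inter> D \<times> D)\<^sup>*} \<times> {v. (x,v) \<in> (R \<inter> D \<times> D)\<^sup>*})\<^sup>*"
  using assms
proof (induction rule: rtrancl_induct)
  case base then show ?case by simp
next
  case (step y z)
  have "(x,z) \<in> (R \<inter> D \<times> D)\<^sup>*" using step(1,2) by (rule rtrancl_into_rtrancl)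
  hence "(y,z) \<in> R \<inter> {v. (x,v) \<in> (R \<inter> D \<times> D)\<^sup>*} \<times> {v. (x,v) \<in> (R \<inter> D \<times> D)\<^sup>*}"
    using step(1,2) by blast
  with step(3) show ?case by (rule rtrancl_into_rtrancl)
qed

lemma cover_path:
  assumes "(w,u) \<in> (E \<inter> C \<times> C)\<^sup>*"
  shows "u = w \<or> (\<exists>w'. (w,w') \<in> E \<and> w' \<in> C \<and> w' \<noteq> w \<and> (w',u) \<in> (E \<inter> (C-{w}) \<times> (C-{w}))\<^sup>*)"
  using assms
proof (induction rule: rtrancl_induct)
  case base then show ?case by simp
next
  case (step y z)
  show ?case
  proof (cases "z = w")
    case True then show ?thesis by simp
  next
    case zw: False
    show ?thesis
    proof (cases "y = w")
      case True
      then show ?thesis using step(2) zw by blast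
    next
      case False
      with step(3) obtain w' where w': "(w,w') \<in> E" "w' \<in> C" "w' \<noteq> w"
        "(w',y) \<in> (E \<inter> (C-{w}) \<times> (C-{w}))\<^sup>*" by blast
      have "(y,z) \<in> E \<inter> (C-{w}) \<times> (C-{w})" using step(2) zw False by blast
      with w'(4) have "(w',z) \<in> (E \<inter> (C-{w}) \<times> (C-{w}))\<^sup>*" by (rule rtrancl_into_rtrancl)
      with w' show ?thesis by blast
    qed
  qed
qed

definition kinv :: "'a graph \<Rightarrow> 'a \<times> 'a set \<Rightarrow> bool" where
  "kinv G p \<longleftrightarrow> snd p \<subseteq> verts G \<and> infinite (snd p) \<and> fst p \<in> snd p \<and>
     (\<forall>u\<in>snd p. (fst p,u) \<in> (edges G \<inter> snd p \<times> snd p)\<^sup>*)"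

lemma kstep:
  assumes wf: "wf_graph G" and lf: "\<forall>v\<in>verts G. finite {u. (v,u) \<in> edges G}"
    and inv: "kinv G (w,C)"
  shows "\<exists>w' C'. kinv G (w',C') \<and> (w,w') \<in> edges G \<and> C' \<subseteq> C - {w}"
proof -
  let ?N = "{u \<in> C. (w,u) \<in> edges G}"
  let ?R = "edges G \<inter> (C - {w}) \<times> (C - {w})"
  define K where "K w' = {u. (w',u) \<in> ?R\<^sup>*}" for w'
  have CV: "C \<subseteq> verts G" "infinite C" "w \<in> C" "\<forall>u\<in>C. (w,u) \<in> (edges G \<inter> C \<times> C)\<^sup>*"
    using inv unfolding kinv_def by auto
  have finN: "finite ?N"
  proof (rule finite_subset)
    show "?N \<subseteq> {u. (w,u) \<in> edges G}" by blast
    show "finite {u. (w,u) \<in> edges G}" using lf CV(1,3) by blast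
  qed
  have Nw: "w' \<in> ?N \<Longrightarrow> w' \<noteq> w" for w'
    using wf unfolding wf_graph_def by auto
  have cover: "C - {w} \<subseteq> (\<Union>w'\<in>?N. K w')"
  proof
    fix u assume u: "u \<in> C - {w}"
    from cover_path[OF CV(4)[rule_format, OF DiffD1[OF u]]] u
    obtain w' where "(w,w') \<in> edges G" "w' \<in> C" "(w',u) \<in> ?R\<^sup>*" by blast
    thus "u \<in> (\<Union>w'\<in>?N. K w')" unfolding K_def by blast
  qed
  have Ksub: "K w' \<subseteq> C - {w}" if "w' \<in> ?N" for w'
  proof
    fix u assume "u \<in> K w'"
    hence "(w',u) \<in> ?R\<^sup>*" unfolding K_def by simp
    moreover have "w' \<in> C - {w}" using that Nw[OF that] by blast
    ultimately show "u \<in> C - {w}" by (rule comp_in)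
  qed
  have "infinite (C - {w})" using CV(2) by simp
  then obtain w' where w': "w' \<in> ?N" "infinite (K w')"
  proof -
    have "\<not> finite (\<Union>w'\<in>?N. K w')" using cover \<open>infinite (C - {w})\<close> finite_subset by blast
    hence "\<not> (\<forall>w'\<in>?N. finite (K w'))" using finN by blast
    thus ?thesis using that by blast
  qed
  have "kinv G (w', K w')"
    unfolding kinv_def fst_conv snd_conv
  proof (intro conjI ballI)
    show "K w' \<subseteq> verts G" using Ksub[OF w'(1)] CV(1) by blast
    show "infinite (K w')" by (rule w'(2))
    show "w' \<in> K w'" unfolding K_def by simp
    fix u assume "u \<in> K w'"
    hence "(w',u) \<in> ?R\<^sup>*" unfolding K_def by simp
    from restrict_comp[OF this] show "(w',u) \<in> (edges G \<inter> K w' \<times> K w')\<^sup>*"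
      unfolding K_def by simp
  qed
  thus ?thesis using w'(1) Ksub[OF w'(1)] by blast
qed

lemma konig:
  assumes wf: "wf_graph G" and lf: "\<forall>v\<in>verts G. finite {u. (v,u) \<in> edges G}"
    and C: "C \<subseteq> verts G" "infinite C" "w \<in> C" "\<forall>u\<in>C. (w,u) \<in> (edges G \<inter> C \<times> C)\<^sup>*"
  shows "\<exists>s. ray G s \<and> (\<forall>j. s j \<in> C)"
proof -
  define nxt where "nxt p = (SOME p'. kinv G p' \<and> (fst p, fst p') \<in> edges G \<and> snd p' \<subseteq> snd p - {fst p})" for p
  define sq where "sq n = (nxt ^^ n) (w,C)" for n
  have nxt: "kinv G (nxt p) \<and> (fst p, fst (nxt p)) \<in> edges G \<and> snd (nxt p) \<subseteq> snd p - {fst p}"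
    if "kinv G p" for p
  proof -
    have "kinv G (fst p, snd p)" using that by simp
    from kstep[OF wf lf this] obtain w' C' where
      "kinv G (w',C') \<and> (fst p,w') \<in> edges G \<and> C' \<subseteq> snd p - {fst p}" by blast
    hence "\<exists>p'. kinv G p' \<and> (fst p, fst p') \<in> edges G \<and> snd p' \<subseteq> snd p - {fst p}"
      by (intro exI[of _ "(w',C')"]) simp
    thus ?thesis unfolding nxt_def by (rule someI_ex)
  qed
  have sqS: "sq (Suc n) = nxt (sq n)" for n unfolding sq_def by simp
  have inv: "kinv G (sq n)" for n
  proof (induction n)
    case 0 then show ?case using C unfolding sq_def kinv_def by simp
  next
    case (Suc n) then show ?case using nxt[OF Suc] unfolding sqS by blast
  qed
  have dec: "snd (sq m) \<subseteq> snd (sq n)" if "n \<le> m" for n m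
    using that
  proof (induction rule: dec_induct)
    case base then show ?case by simp
  next
    case (step k) then show ?case using nxt[OF inv[of k]] unfolding sqS[of k] by blast
  qed
  define s where "s j = fst (sq j)" for j
  have sin: "s j \<in> snd (sq j)" for j using inv[of j] unfolding s_def kinv_def by simp
  have neq: "s m \<noteq> s n" if "n < m" for n m
  proof -
    have "snd (sq m) \<subseteq> snd (sq (Suc n))" using dec that by simp
    also have "\<dots> \<subseteq> snd (sq n) - {s n}" using nxt[OF inv[of n]] sqS[of n] unfolding s_def by simp
    finally show ?thesis using sin[of m] by blast
  qed
  have "inj s"
  proof (rule injI)
    fix x y assume "s x = s y"
    show "x = y"
    proof (rule ccontr)
      assume "x \<noteq> y"
      hence "x < y \<or> y < x" by arith
      thus False using neq[of x y] neq[of y x] \<open>s x = s y\<close> by auto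
    qed
  qed
  moreover have "s i \<in> verts G" for i using sin[of i] inv[of i] unfolding kinv_def by blast
  moreover have "(s i, s (Suc i)) \<in> edges G" for i
    using nxt[OF inv[of i]] sqS[of i] unfolding s_def by simp
  moreover have "s j \<in> C" for j
  proof -
    have "snd (sq 0) = C" unfolding sq_def by simp
    thus ?thesis using sin[of j] dec[of 0 j] by blast
  qed
  ultimately have "ray G s \<and> (\<forall>j. s j \<in> C)" unfolding ray_def by blast
  thus ?thesis by blast
qed



locale transfer =
  fixes S :: "'s graph" and T :: "'t graph" and Q :: "'s \<Rightarrow> 't \<Rightarrow> bool" and N :: nat
  assumes wfS: "wf_graph S" and wfT: "wf_graph T"
  and H1: "\<And>t. t \<in> verts T \<Longrightarrow> finite {a \<in> verts S. Q a t} \<and> connected_on S {a \<in> verts S. Q a t}"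
  and H2: "\<And>a. a \<in> verts S \<Longrightarrow> finite {t \<in> verts T. Q a t} \<and> card {t \<in> verts T. Q a t} \<le> N
                 \<and> connected_on T {t \<in> verts T. Q a t}"
  and H3: "\<And>t t'. (t,t') \<in> edges T \<Longrightarrow> \<exists>a\<in>verts S. Q a t \<and> Q a t'"
  and H4: "\<And>a a'. (a,a') \<in> edges S \<Longrightarrow> \<exists>t\<in>verts T. Q a t \<and> Q a' t"
begin

abbreviation F where "F t \<equiv> {a \<in> verts S. Q a t}"
abbreviation I where "I a \<equiv> {t \<in> verts T. Q a t}"

definition follows :: "(nat \<Rightarrow> 's) \<Rightarrow> (nat \<Rightarrow> 't) \<Rightarrow> bool" where
  "follows s r \<longleftrightarrow> ray S s \<and> (\<forall>j. \<exists>i. Q (s j) (r i))"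

lemma F_ne: "t \<in> verts T \<Longrightarrow> \<exists>a. a \<in> verts S \<and> Q a t"
  using H1[of t] unfolding connected_on_def by blast

lemma F_conn: "t \<in> verts T \<Longrightarrow> a \<in> F t \<Longrightarrow> b \<in> F t \<Longrightarrow> (a,b) \<in> (edges S \<inter> F t \<times> F t)\<^sup>*"
  using H1[of t] unfolding connected_on_def by blast

lemma I_conn: "a \<in> verts S \<Longrightarrow> t \<in> I a \<Longrightarrow> t' \<in> I a \<Longrightarrow> (t,t') \<in> (edges T \<inter> I a \<times> I a)\<^sup>*"
  using H2[of a] unfolding connected_on_def by blast

lemma K1:
  assumes r: "ray T r" and Y: "finite Y"
  shows "finite {i. \<exists>a\<in>Y \<inter> verts S. Q a (r i)}"
proof -
  have "{i. \<exists>a\<in>Y \<inter> verts S. Q a (r i)} \<subseteq> (\<Union>a\<in>Y \<inter> verts S. r -` I a)"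
    using r unfolding ray_def by auto
  moreover have "finite (\<Union>a\<in>Y \<inter> verts S. r -` I a)"
  proof (rule finite_UN_I)
    show "finite (Y \<inter> verts S)" using Y by simp
    fix a assume "a \<in> Y \<inter> verts S"
    hence "finite (I a)" using H2 by blast
    moreover have "inj r" using r unfolding ray_def by simp
    ultimately show "finite (r -` I a)" by (rule finite_vimageI)
  qed
  ultimately show ?thesis by (rule finite_subset)
qed

lemma K2:
  assumes r: "ray T r" and s: "ray S s"
  shows "\<exists>m. \<forall>j\<ge>m. \<forall>i. Q (s j) (r i) \<longrightarrow> n \<le> i"
proof -
  have "finite (\<Union>i<n. F (r i))"
  proof (rule finite_UN_I)
    show "finite {..<n}" by simp
    fix i show "finite (F (r i))" using H1 r unfolding ray_def by blast
  qed
  moreover have "inj s" using s unfolding ray_def by simp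
  ultimately obtain m where m: "\<forall>j\<ge>m. s j \<notin> (\<Union>i<n. F (r i))" using inj_avoid by blast
  have "\<forall>j\<ge>m. \<forall>i. Q (s j) (r i) \<longrightarrow> n \<le> i"
  proof (intro allI impI)
    fix j i assume "m \<le> j" "Q (s j) (r i)"
    moreover have "s j \<in> verts S" using s unfolding ray_def by simp
    ultimately have "s j \<in> F (r i)" by simp
    show "n \<le> i"
    proof (rule ccontr)
      assume "\<not> n \<le> i"
      hence "i \<in> {..<n}" by simp
      with \<open>s j \<in> F (r i)\<close> have "s j \<in> (\<Union>i<n. F (r i))" by blast
      with m \<open>m \<le> j\<close> show False by blast
    qed
  qed
  thus ?thesis by blast
qed

lemma P1:
  assumes r: "ray T r" and fol: "follows s r" and sep: "separation S A B" and fin: "finite (A \<inter> B)"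
    and tA: "has_tail_in s A"
  shows "has_tail_in r {t \<in> verts T. \<exists>a\<in>A. Q a t}"
proof -
  have s: "ray S s" using fol by (simp add: follows_def)
  have rV: "r i \<in> verts T" for i using r unfolding ray_def by simp
  obtain i0 where i0: "\<forall>i\<ge>i0. \<not> (\<exists>a\<in>(A \<inter> B) \<inter> verts S. Q a (r i))"
    using fin_tail[OF K1[OF r fin]] by blast
  have side: "b \<in> A - B" if "i0 \<le> i" "a \<in> F (r i)" "a \<in> A - B" "b \<in> F (r i)" for i a b
  proof -
    have "(a,b) \<in> (edges S \<inter> F (r i) \<times> F (r i))\<^sup>*" using F_conn[OF rV] that by blast
    from sep_path[OF wfS sep this that(3)]
    show ?thesis using i0 that(1) by blast
  qed
  have prp: "F (r i') \<subseteq> A - B" if "i0 \<le> i" "a \<in> F (r i)" "a \<in> A - B" "i \<le> i'" for i a i'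
    using that(4)
  proof (induction rule: dec_induct)
    case base then show ?case using side[OF that(1-3)] by blast
  next
    case (step k)
    have "(r k, r (Suc k)) \<in> edges T" using r unfolding ray_def by simp
    then obtain c where c: "c \<in> verts S" "Q c (r k)" "Q c (r (Suc k))" using H3 by blast
    have "c \<in> A - B" using step(3) c by blast
    moreover have "i0 \<le> Suc k" using that(1) step(1) by simp
    ultimately show ?case using side[of "Suc k" c] c by blast
  qed
  obtain m where m: "\<forall>j\<ge>m. \<forall>i. Q (s j) (r i) \<longrightarrow> i0 \<le> i" using K2[OF r s] by blast
  obtain n1 where n1: "\<forall>j\<ge>n1. s j \<in> A" using tA unfolding has_tail_in_def by blast
  obtain n2 where n2: "\<forall>j\<ge>n2. s j \<notin> A \<inter> B" using inj_avoid[of s "A \<inter> B"] s fin unfolding ray_def by blast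
  define j where "j = max m (max n1 n2)"
  have sj: "s j \<in> A - B" "s j \<in> verts S" using n1 n2 s unfolding j_def ray_def by auto
  obtain i where i: "Q (s j) (r i)" using fol unfolding follows_def by blast
  have "m \<le> j" unfolding j_def by simp
  hence "i0 \<le> i" using m i by blast
  hence allF: "\<forall>i'\<ge>i. F (r i') \<subseteq> A - B" using prp[of i "s j"] sj i by blast
  have "\<forall>i'\<ge>i. r i' \<in> {t \<in> verts T. \<exists>a\<in>A. Q a t}"
  proof (intro allI impI)
    fix i' assume "i \<le> i'"
    obtain a where "a \<in> verts S" "Q a (r i')" using F_ne[OF rV] by blast
    thus "r i' \<in> {t \<in> verts T. \<exists>a\<in>A. Q a t}" using allF \<open>i \<le> i'\<close> rV by blast
  qed
  thus ?thesis unfolding has_tail_in_def by blast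
qed


lemma lf_S: "\<forall>v\<in>verts S. finite {u. (v,u) \<in> edges S}"
proof
  fix v assume v: "v \<in> verts S"
  have "{u. (v,u) \<in> edges S} \<subseteq> (\<Union>t\<in>I v. F t)"
  proof
    fix u assume "u \<in> {u. (v,u) \<in> edges S}"
    hence e: "(v,u) \<in> edges S" by simp
    then obtain t where "t \<in> verts T" "Q v t" "Q u t" using H4 by blast
    moreover have "u \<in> verts S" using wf_edge[OF wfS e] by simp
    ultimately show "u \<in> (\<Union>t\<in>I v. F t)" by blast
  qed
  moreover have "finite (\<Union>t\<in>I v. F t)"
  proof (rule finite_UN_I)
    show "finite (I v)" using H2[OF v] by blast
    fix t assume "t \<in> I v" thus "finite (F t)" using H1 by blast
  qed
  ultimately show "finite {u. (v,u) \<in> edges S}" by (rule finite_subset)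
qed

lemma follow_exists:
  assumes r: "ray T r" shows "\<exists>s. follows s r"
proof -
  define W where "W = {a \<in> verts S. \<exists>i. Q a (r i)}"
  have rV: "r i \<in> verts T" for i using r unfolding ray_def by simp
  have FW: "F (r i) \<subseteq> W" for i unfolding W_def by blast
  have WV: "W \<subseteq> verts S" unfolding W_def by blast
  have infW: "infinite W"
  proof
    assume "finite W"
    from K1[OF r this] have "finite {i. \<exists>a\<in>W \<inter> verts S. Q a (r i)}" .
    moreover have "{i. \<exists>a\<in>W \<inter> verts S. Q a (r i)} = UNIV"
    proof (intro set_eqI iffI)
      fix i :: nat
      obtain a where "a \<in> verts S" "Q a (r i)" using F_ne[OF rV] by blast
      hence "a \<in> W \<inter> verts S" unfolding W_def by blast
      thus "i \<in> {i. \<exists>a\<in>W \<inter> verts S. Q a (r i)}" using \<open>Q a (r i)\<close> by blast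
    qed simp
    ultimately show False by simp
  qed
  obtain a0 where a0: "a0 \<in> verts S" "Q a0 (r 0)" using F_ne[OF rV] by blast
  have conn: "\<forall>a\<in>F (r i). (a0, a) \<in> (edges S \<inter> W \<times> W)\<^sup>*" for i
  proof (induction i)
    case 0
    show ?case
    proof
      fix a assume "a \<in> F (r 0)"
      hence "(a0,a) \<in> (edges S \<inter> F (r 0) \<times> F (r 0))\<^sup>*" using F_conn[OF rV] a0 by blast
      moreover have "edges S \<inter> F (r 0) \<times> F (r 0) \<subseteq> edges S \<inter> W \<times> W" using FW[of 0] by blast
      ultimately show "(a0, a) \<in> (edges S \<inter> W \<times> W)\<^sup>*" using rtrancl_mono by blast
    qed
  next
    case (Suc i)
    have "(r i, r (Suc i)) \<in> edges T" using r unfolding ray_def by simp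
    then obtain c where c: "c \<in> verts S" "Q c (r i)" "Q c (r (Suc i))" using H3 by blast
    have ac: "(a0, c) \<in> (edges S \<inter> W \<times> W)\<^sup>*" using Suc c by blast
    show ?case
    proof
      fix a assume "a \<in> F (r (Suc i))"
      hence "(c,a) \<in> (edges S \<inter> F (r (Suc i)) \<times> F (r (Suc i)))\<^sup>*" using F_conn[OF rV] c by blast
      moreover have "edges S \<inter> F (r (Suc i)) \<times> F (r (Suc i)) \<subseteq> edges S \<inter> W \<times> W" using FW[of "Suc i"] by blast
      ultimately have "(c, a) \<in> (edges S \<inter> W \<times> W)\<^sup>*" using rtrancl_mono by blast
      with ac show "(a0, a) \<in> (edges S \<inter> W \<times> W)\<^sup>*" by (rule rtrancl_trans)
    qed
  qed
  have "\<forall>u\<in>W. (a0,u) \<in> (edges S \<inter> W \<times> W)\<^sup>*"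
  proof
    fix u assume "u \<in> W"
    then obtain i where "u \<in> F (r i)" unfolding W_def by blast
    thus "(a0,u) \<in> (edges S \<inter> W \<times> W)\<^sup>*" using conn by blast
  qed
  moreover have "a0 \<in> W" unfolding W_def using a0 by blast
  ultimately obtain s where s: "ray S s" "\<forall>j. s j \<in> W"
    using konig[OF wfS lf_S WV infW] by blast
  have "follows s r" unfolding follows_def using s unfolding W_def by blast
  thus ?thesis by blast
qed

lemma lift_base:
  assumes "a \<in> verts S" "\<not> (\<exists>x\<in>X \<inter> verts T. Q a x)" "t \<in> I a" "t' \<in> I a"
  shows "(t,t') \<in> (edges T \<inter> (verts T - X) \<times> (verts T - X))\<^sup>*"
proof -
  have "(t,t') \<in> (edges T \<inter> I a \<times> I a)\<^sup>*" using I_conn assms by blast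
  moreover have "edges T \<inter> I a \<times> I a \<subseteq> edges T \<inter> (verts T - X) \<times> (verts T - X)" using assms(2) by blast
  ultimately show ?thesis using rtrancl_mono by blast
qed

lemma lift_path:
  assumes p: "(a,b) \<in> (edges S \<inter> (verts S - Y) \<times> (verts S - Y))\<^sup>*"
    and Y: "Y = {a \<in> verts S. \<exists>x\<in>X \<inter> verts T. Q a x}"
    and a: "a \<in> verts S - Y" and t: "t \<in> I a"
  shows "\<forall>t'\<in>I b. (t,t') \<in> (edges T \<inter> (verts T - X) \<times> (verts T - X))\<^sup>*"
  using p
proof (induction rule: rtrancl_induct)
  case base
  show ?case using lift_base[of a X t] a t Y by blast
next
  case (step y z)
  have e: "(y,z) \<in> edges S" "z \<in> verts S - Y" using step(2) by auto
  then obtain t'' where t'': "t'' \<in> verts T" "Q y t''" "Q z t''" using H4 by blast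
  have 1: "(t,t'') \<in> (edges T \<inter> (verts T - X) \<times> (verts T - X))\<^sup>*" using step(3) t'' by blast
  show ?case
  proof
    fix t' assume "t' \<in> I z"
    hence "(t'',t') \<in> (edges T \<inter> (verts T - X) \<times> (verts T - X))\<^sup>*"
      using lift_base[of z X t'' t'] e(2) t'' Y by blast
    with 1 show "(t,t') \<in> (edges T \<inter> (verts T - X) \<times> (verts T - X))\<^sup>*" by (rule rtrancl_trans)
  qed
qed

lemma P2:
  assumes r: "ray T r" "follows s r" and r': "ray T r'" "follows s' r'" and eq: "rays_equiv S s s'"
  shows "rays_equiv T r r'"
  unfolding rays_equiv_def
proof (intro allI impI)
  fix X :: "'t set" assume X: "finite X"
  define Y where "Y = {a \<in> verts S. \<exists>x\<in>X \<inter> verts T. Q a x}"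
  let ?RS = "edges S \<inter> (verts S - Y) \<times> (verts S - Y)"
  let ?RT = "edges T \<inter> (verts T - X) \<times> (verts T - X)"
  have s: "ray S s" "ray S s'" using r(2) r'(2) by (auto simp: follows_def)
  have "Y \<subseteq> (\<Union>x\<in>X \<inter> verts T. F x)" unfolding Y_def by blast
  moreover have "finite (\<Union>x\<in>X \<inter> verts T. F x)"
  proof (rule finite_UN_I)
    show "finite (X \<inter> verts T)" using X by simp
    fix x assume "x \<in> X \<inter> verts T" thus "finite (F x)" using H1 by blast
  qed
  ultimately have Yfin: "finite Y" by (rule finite_subset)
  obtain C where C: "C \<in> components_minus S Y" "has_tail_in s C" "has_tail_in s' C"
    using eq Yfin unfolding rays_equiv_def by blast
  obtain v where v: "v \<in> verts S - Y" "C = component_of S Y v"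
    using C(1) unfolding components_minus_def by blast
  obtain i0 where i0: "\<forall>i\<ge>i0. r i \<notin> X" using inj_avoid[of r X] r(1) X unfolding ray_def by blast
  obtain i0' where i0': "\<forall>i\<ge>i0'. r' i \<notin> X" using inj_avoid[of r' X] r'(1) X unfolding ray_def by blast
  obtain m where m: "\<forall>j\<ge>m. \<forall>i. Q (s j) (r i) \<longrightarrow> i0 \<le> i" using K2[OF r(1) s(1)] by blast
  obtain m' where m': "\<forall>j\<ge>m'. \<forall>i. Q (s' j) (r' i) \<longrightarrow> i0' \<le> i" using K2[OF r'(1) s(2)] by blast
  obtain n1 where n1: "\<forall>j\<ge>n1. s j \<in> C" using C(2) unfolding has_tail_in_def by blast
  obtain n1' where n1': "\<forall>j\<ge>n1'. s' j \<in> C" using C(3) unfolding has_tail_in_def by blast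
  define j where "j = max m n1"
  define j' where "j' = max m' n1'"
  have sj: "s j \<in> C" "s' j' \<in> C" using n1 n1' unfolding j_def j'_def by auto
  obtain i where i: "Q (s j) (r i)" using r(2) unfolding follows_def by blast
  obtain i' where i': "Q (s' j') (r' i')" using r'(2) unfolding follows_def by blast
  have "m \<le> j" "m' \<le> j'" unfolding j_def j'_def by auto
  hence ii: "i0 \<le> i" "i0' \<le> i'" using m m' i i' by blast+
  have p1: "(v, s j) \<in> ?RS\<^sup>*" "(v, s' j') \<in> ?RS\<^sup>*" using sj v(2) unfolding component_of_def by auto
  have p2: "(s j, s' j') \<in> ?RS\<^sup>*" using rt_rev[OF wfS p1(1)] p1(2) by (rule rtrancl_trans)
  have sjY: "s j \<in> verts S - Y" using comp_in[OF p1(1) v(1)] .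
  have riV: "r i \<in> I (s j)" "r' i' \<in> I (s' j')" using r(1) r'(1) i i' unfolding ray_def by auto
  have link: "(r i, r' i') \<in> ?RT\<^sup>*"
    using lift_path[OF p2 Y_def sjY riV(1)] riV(2) by blast
  define D where "D = component_of T X (r i)"
  have "r i \<in> verts T - X" using riV(1) i0 ii(1) by blast
  hence D: "D \<in> components_minus T X" unfolding D_def components_minus_def by blast
  have i0i: "\<forall>k\<ge>i. r k \<notin> X" using i0 ii(1) by auto
  have tr: "has_tail_in r D" unfolding D_def using ray_tail_comp[OF r(1) i0i] .
  have i0i': "\<forall>k\<ge>i'. r' k \<notin> X" using i0' ii(2) by auto
  have "\<forall>k\<ge>i'. r' k \<in> D"
  proof (intro allI impI)
    fix k assume "i' \<le> k"
    from ray_path[OF r'(1) i0i' this] have "(r' i', r' k) \<in> ?RT\<^sup>*" .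
    with link have "(r i, r' k) \<in> ?RT\<^sup>*" by (rule rtrancl_trans)
    thus "r' k \<in> D" unfolding D_def component_of_def by simp
  qed
  hence "has_tail_in r' D" unfolding has_tail_in_def by blast
  thus "\<exists>C\<in>components_minus T X. has_tail_in r C \<and> has_tail_in r' C" using D tr by blast
qed

lemma main:
  assumes acc: "accessible S" shows "accessible T"
proof -
  obtain K where K: "\<forall>\<omega> \<omega>'. is_end S \<omega> \<longrightarrow> is_end S \<omega>' \<longrightarrow> \<omega> \<noteq> \<omega>' \<longrightarrow>
     (\<exists>A B. separation S A B \<and> finite (A \<inter> B) \<and> card (A \<inter> B) \<le> K \<and> distinguishes A B \<omega> \<omega>')"
    using acc unfolding accessible_def by blast
  show ?thesis unfolding accessible_def
  proof (intro exI[of _ "K * N"] allI impI)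
    fix \<omega> \<omega>' assume e: "is_end T \<omega>" "is_end T \<omega>'" "\<omega> \<noteq> \<omega>'"
    obtain r where r: "ray T r" "\<omega> = {x. ray T x \<and> rays_equiv T r x}" using e(1) unfolding is_end_def by blast
    obtain r' where r': "ray T r'" "\<omega>' = {x. ray T x \<and> rays_equiv T r' x}" using e(2) unfolding is_end_def by blast
    obtain s where s: "follows s r" using follow_exists[OF r(1)] by blast
    obtain s' where s': "follows s' r'" using follow_exists[OF r'(1)] by blast
    have sr: "ray S s" "ray S s'" using s s' by (auto simp: follows_def)
    let ?e = "{x. ray S x \<and> rays_equiv S s x}"
    let ?e' = "{x. ray S x \<and> rays_equiv S s' x}"
    have ee: "is_end S ?e" "is_end S ?e'" unfolding is_end_def using sr by blast+
    have ne: "?e \<noteq> ?e'"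
    proof
      assume "?e = ?e'"
      moreover have "s' \<in> ?e'" using sr(2) rays_equiv_refl by blast
      ultimately have "rays_equiv S s s'" by blast
      hence "rays_equiv T r r'" using P2[OF r(1) s r'(1) s'] by blast
      hence "\<omega> = \<omega>'" using class_eq[OF wfT] r(2) r'(2) by simp
      with e(3) show False by simp
    qed
    obtain A B where AB: "separation S A B" "finite (A \<inter> B)" "card (A \<inter> B) \<le> K" "distinguishes A B ?e ?e'"
      using K ee ne by blast
    define A' where "A' = {t \<in> verts T. \<exists>a\<in>A. Q a t}"
    define B' where "B' = {t \<in> verts T. \<exists>a\<in>B. Q a t}"
    have ABV: "A \<union> B = verts S" using AB(1) unfolding separation_def by blast
    have sep': "separation T A' B'"
      unfolding separation_def
    proof (intro conjI allI impI notI)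
      show "A' \<union> B' = verts T"
      proof
        show "A' \<union> B' \<subseteq> verts T" unfolding A'_def B'_def by blast
        show "verts T \<subseteq> A' \<union> B'"
        proof
          fix t assume t: "t \<in> verts T"
          then obtain a where "a \<in> verts S" "Q a t" using F_ne by blast
          thus "t \<in> A' \<union> B'" using ABV t unfolding A'_def B'_def by blast
        qed
      qed
      fix x y assume xy: "(x,y) \<in> edges T" "x \<in> A' - B' \<and> y \<in> B' - A'"
      then obtain a where a: "a \<in> verts S" "Q a x" "Q a y" using H3 by blast
      have "x \<in> verts T" "y \<in> verts T" using wf_edge[OF wfT xy(1)] by auto
      thus False using a ABV xy(2) unfolding A'_def B'_def by blast
    qed
    have sub: "A' \<inter> B' \<subseteq> (\<Union>c\<in>A \<inter> B. I c)"
    proof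
      fix t assume t: "t \<in> A' \<inter> B'"
      then obtain a b where ab: "a \<in> A" "b \<in> B" "Q a t" "Q b t" "t \<in> verts T"
        unfolding A'_def B'_def by blast
      have abV: "a \<in> verts S" "b \<in> verts S" using ab ABV by blast+
      show "t \<in> (\<Union>c\<in>A \<inter> B. I c)"
      proof (cases "a \<in> B \<or> b \<in> A")
        case True thus ?thesis using ab abV by blast
      next
        case False
        hence "a \<in> A - B" using ab by blast
        have "(a,b) \<in> (edges S \<inter> F t \<times> F t)\<^sup>*" using F_conn[OF ab(5)] ab abV by blast
        from sep_path[OF wfS AB(1) this \<open>a \<in> A - B\<close>] False
        obtain c where "c \<in> F t" "c \<in> A \<inter> B" by blast
        thus ?thesis using ab(5) by blast
      qed
    qed
    have ABsub: "A \<inter> B \<subseteq> verts S" using ABV by blast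
    have finU: "finite (\<Union>c\<in>A \<inter> B. I c)"
    proof (rule finite_UN_I)
      show "finite (A \<inter> B)" by (rule AB(2))
      fix c assume "c \<in> A \<inter> B" thus "finite (I c)" using H2 ABsub by blast
    qed
    have fin': "finite (A' \<inter> B')" using finite_subset[OF sub finU] .
    have "card (A' \<inter> B') \<le> card (\<Union>c\<in>A \<inter> B. I c)" using card_mono[OF finU sub] .
    also have "\<dots> \<le> (\<Sum>c\<in>A \<inter> B. card (I c))" using card_UN_le[OF AB(2)] .
    also have "\<dots> \<le> (\<Sum>c\<in>A \<inter> B. N)"
    proof (rule sum_mono)
      fix c assume "c \<in> A \<inter> B" thus "card (I c) \<le> N" using H2 ABsub by blast
    qed
    also have "\<dots> = card (A \<inter> B) * N" by simp
    also have "\<dots> \<le> K * N" using AB(3) by simp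
    finally have card': "card (A' \<inter> B') \<le> K * N" .
    have sepBA: "separation S B A" using sep_swap[OF wfS AB(1)] .
    have sepBA': "separation T B' A'" using sep_swap[OF wfT sep'] .
    have finBA: "finite (B \<inter> A)" "finite (B' \<inter> A')" using AB(2) fin' by (simp_all add: Int_commute)
    have dist: "distinguishes A' B' \<omega> \<omega>'"
    proof -
      have sE: "s \<in> ?e" "s' \<in> ?e'" using sr rays_equiv_refl by blast+
      have tA: "has_tail_in x A'" if "x \<in> \<omega>" "has_tail_in s A" for x
      proof -
        have "has_tail_in r A'" using P1[OF r(1) s AB(1,2) that(2)] unfolding A'_def .
        moreover have "rays_equiv T r x" using that(1) r(2) by blast
        ultimately show ?thesis using sep_tail[OF wfT sep' fin'] r(1) by blast
      qed
      have tB: "has_tail_in x B'" if "x \<in> \<omega>" "has_tail_in s B" for x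
      proof -
        have "has_tail_in r B'" using P1[OF r(1) s sepBA finBA(1) that(2)] unfolding B'_def .
        moreover have "rays_equiv T r x" using that(1) r(2) by blast
        ultimately show ?thesis using sep_tail[OF wfT sepBA' finBA(2)] r(1) by blast
      qed
      have tA': "has_tail_in x A'" if "x \<in> \<omega>'" "has_tail_in s' A" for x
      proof -
        have "has_tail_in r' A'" using P1[OF r'(1) s' AB(1,2) that(2)] unfolding A'_def .
        moreover have "rays_equiv T r' x" using that(1) r'(2) by blast
        ultimately show ?thesis using sep_tail[OF wfT sep' fin'] r'(1) by blast
      qed
      have tB': "has_tail_in x B'" if "x \<in> \<omega>'" "has_tail_in s' B" for x
      proof -
        have "has_tail_in r' B'" using P1[OF r'(1) s' sepBA finBA(1) that(2)] unfolding B'_def .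
        moreover have "rays_equiv T r' x" using that(1) r'(2) by blast
        ultimately show ?thesis using sep_tail[OF wfT sepBA' finBA(2)] r'(1) by blast
      qed
      from AB(4) show ?thesis unfolding distinguishes_def
      proof (elim disjE conjE)
        assume "\<forall>x\<in>?e. has_tail_in x A" "\<forall>x\<in>?e'. has_tail_in x B"
        hence "has_tail_in s A" "has_tail_in s' B" using sE by blast+
        thus "((\<forall>x\<in>\<omega>. has_tail_in x A') \<and> (\<forall>x\<in>\<omega>'. has_tail_in x B')) \<or>
              ((\<forall>x\<in>\<omega>. has_tail_in x B') \<and> (\<forall>x\<in>\<omega>'. has_tail_in x A'))" using tA tB' by blast
      next
        assume "\<forall>x\<in>?e. has_tail_in x B" "\<forall>x\<in>?e'. has_tail_in x A"
        hence "has_tail_in s B" "has_tail_in s' A" using sE by blast+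
        thus "((\<forall>x\<in>\<omega>. has_tail_in x A') \<and> (\<forall>x\<in>\<omega>'. has_tail_in x B')) \<or>
              ((\<forall>x\<in>\<omega>. has_tail_in x B') \<and> (\<forall>x\<in>\<omega>'. has_tail_in x A'))" using tB tA' by blast
      qed
    qed
    show "\<exists>A B. separation T A B \<and> finite (A \<inter> B) \<and> card (A \<inter> B) \<le> K * N \<and> distinguishes A B \<omega> \<omega>'"
      using sep' fin' card' dist by blast
  qed
qed

end



lemma conn_sub:
  assumes "subgraph F G" "connected_graph F"
  shows "connected_on G (verts F)"
proof -
  have a: "verts F \<noteq> {}" "verts F \<subseteq> verts G" "edges F \<subseteq> edges G"
    "\<forall>u\<in>verts F. \<forall>v\<in>verts F. (u, v) \<in> (edges F \<inter> verts F \<times> verts F)\<^sup>*"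
    using assms unfolding subgraph_def connected_graph_def connected_on_def by auto
  have "edges F \<inter> verts F \<times> verts F \<subseteq> edges G \<inter> verts F \<times> verts F" using a(3) by blast
  hence "\<forall>u\<in>verts F. \<forall>v\<in>verts F. (u, v) \<in> (edges G \<inter> verts F \<times> verts F)\<^sup>*"
    using a(4) rtrancl_mono by blast
  thus ?thesis using a(1,2) unfolding connected_on_def by blast
qed

lemma part_verts:
  assumes "decomposition G H P" "h \<in> verts H"
  shows "{t \<in> verts G. t \<in> verts (P h)} = verts (P h)"
proof -
  have "subgraph (P h) G" using assms unfolding decomposition_def by simp
  hence "verts (P h) \<subseteq> verts G" unfolding subgraph_def by simp
  thus ?thesis by blast
qed

lemma part_edge:
  assumes "decomposition G H P" "(x,y) \<in> edges G"
  shows "\<exists>h\<in>verts H. x \<in> verts (P h) \<and> y \<in> verts (P h)"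
proof -
  have "edges G = (\<Union>h\<in>verts H. edges (P h))" using assms(1) unfolding decomposition_def by simp
  then obtain h where h: "h \<in> verts H" "(x,y) \<in> edges (P h)" using assms(2) by blast
  have "subgraph (P h) G" using assms(1) h(1) unfolding decomposition_def by simp
  hence "wf_graph (P h)" unfolding subgraph_def by simp
  from wf_edge[OF this h(2)] show ?thesis using h(1) by blast
qed

lemma honest_edge:
  assumes "wf_graph H" "decomposition G H P" "honest H P" "(h,h') \<in> edges H"
  shows "\<exists>v\<in>verts G. v \<in> verts (P h) \<and> v \<in> verts (P h')"
proof -
  obtain v where v: "v \<in> verts (P h)" "v \<in> verts (P h')" using assms(3,4) unfolding honest_def by blast
  have "h \<in> verts H" using wf_edge[OF assms(1,4)] by blast
  moreover have "verts G = (\<Union>h\<in>verts H. verts (P h))" using assms(2) unfolding decomposition_def by simp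
  ultimately have "v \<in> verts G" using v by blast
  thus ?thesis using v by blast
qed

theorem lemma3p6:
  fixes G :: "'a graph" and H :: "'b graph" and P :: "'b \<Rightarrow> 'a graph"
  assumes "wf_graph G" and "wf_graph H"
  shows "(decomposition G H P \<and> point_finite G H P \<and> honest H P \<and>
            (\<forall>h\<in>verts H. connected_graph (P h)) \<and>
            (\<exists>N::nat. \<forall>h\<in>verts H. finite (verts (P h)) \<and> card (verts (P h)) \<le> N) \<and>
            accessible H
           \<longrightarrow> accessible G)
       \<and> (decomposition G H P \<and> honest H P \<and>
            (\<forall>h\<in>verts H. connected_graph (P h) \<and> finite (verts (P h))) \<and>
            (\<exists>N::nat. \<forall>v\<in>verts G. finite (Hv H P v) \<and> card (Hv H P v) \<le> N) \<and>
            accessible G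
           \<longrightarrow> accessible H)"
proof (intro conjI impI)
  assume a: "decomposition G H P \<and> point_finite G H P \<and> honest H P \<and>
            (\<forall>h\<in>verts H. connected_graph (P h)) \<and>
            (\<exists>N::nat. \<forall>h\<in>verts H. finite (verts (P h)) \<and> card (verts (P h)) \<le> N) \<and>
            accessible H"
  then obtain N where N: "\<forall>h\<in>verts H. finite (verts (P h)) \<and> card (verts (P h)) \<le> N" by blast
  have d: "decomposition G H P" and pf: "point_finite G H P" and ho: "honest H P"
    and cg: "\<forall>h\<in>verts H. connected_graph (P h)" and acc: "accessible H" using a by auto
  interpret tr: transfer H G "\<lambda>h v. v \<in> verts (P h)" N
  proof (unfold_locales)
    show "wf_graph H" "wf_graph G" by fact+
    fix t assume t: "t \<in> verts G"
    have "{a \<in> verts H. t \<in> verts (P a)} = Hv H P t" unfolding Hv_def by simp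
    moreover have "finite (Hv H P t)" using pf t unfolding point_finite_def by blast
    moreover have "connected_on H (Hv H P t)" using d t unfolding decomposition_def by blast
    ultimately show "finite {a \<in> verts H. t \<in> verts (P a)} \<and> connected_on H {a \<in> verts H. t \<in> verts (P a)}"
      by simp
  next
    fix a assume a: "a \<in> verts H"
    have sg: "subgraph (P a) G" using d a unfolding decomposition_def by blast
    show "finite {t \<in> verts G. t \<in> verts (P a)} \<and> card {t \<in> verts G. t \<in> verts (P a)} \<le> N
        \<and> connected_on G {t \<in> verts G. t \<in> verts (P a)}"
      unfolding part_verts[OF d a] using N a conn_sub[OF sg] cg by simp
  next
    fix t t' assume "(t,t') \<in> edges G"
    thus "\<exists>a\<in>verts H. t \<in> verts (P a) \<and> t' \<in> verts (P a)" using part_edge[OF d] by blast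
  next
    fix h h' assume "(h,h') \<in> edges H"
    thus "\<exists>t\<in>verts G. t \<in> verts (P h) \<and> t \<in> verts (P h')" using honest_edge[OF assms(2) d ho] by blast
  qed
  show "accessible G" using tr.main[OF acc] .
next
  assume a: "decomposition G H P \<and> honest H P \<and>
            (\<forall>h\<in>verts H. connected_graph (P h) \<and> finite (verts (P h))) \<and>
            (\<exists>N::nat. \<forall>v\<in>verts G. finite (Hv H P v) \<and> card (Hv H P v) \<le> N) \<and>
            accessible G"
  then obtain N where N: "\<forall>v\<in>verts G. finite (Hv H P v) \<and> card (Hv H P v) \<le> N" by blast
  have d: "decomposition G H P" and ho: "honest H P"
    and cg: "\<forall>h\<in>verts H. connected_graph (P h) \<and> finite (verts (P h))" and acc: "accessible G"
    using a by auto
  interpret tr: transfer G H "\<lambda>v h. v \<in> verts (P h)" N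
  proof (unfold_locales)
    show "wf_graph G" "wf_graph H" by fact+
    fix t assume t: "t \<in> verts H"
    have sg: "subgraph (P t) G" using d t unfolding decomposition_def by blast
    show "finite {a \<in> verts G. a \<in> verts (P t)} \<and> connected_on G {a \<in> verts G. a \<in> verts (P t)}"
      unfolding part_verts[OF d t] using conn_sub[OF sg] cg t by simp
  next
    fix a assume a: "a \<in> verts G"
    have "{t \<in> verts H. a \<in> verts (P t)} = Hv H P a" unfolding Hv_def by simp
    moreover have "finite (Hv H P a) \<and> card (Hv H P a) \<le> N" using N a by blast
    moreover have "connected_on H (Hv H P a)" using d a unfolding decomposition_def by blast
    ultimately show "finite {t \<in> verts H. a \<in> verts (P t)} \<and> card {t \<in> verts H. a \<in> verts (P t)} \<le> N
        \<and> connected_on H {t \<in> verts H. a \<in> verts (P t)}"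
      by simp
  next
    fix h h' assume "(h,h') \<in> edges H"
    thus "\<exists>a\<in>verts G. a \<in> verts (P h) \<and> a \<in> verts (P h')" using honest_edge[OF assms(2) d ho] by blast
  next
    fix t t' assume "(t,t') \<in> edges G"
    thus "\<exists>a\<in>verts H. t \<in> verts (P a) \<and> t' \<in> verts (P a)" using part_edge[OF d] by blast
  qed
  show "accessible H" using tr.main[OF acc] .
qed


end
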